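(* Let $Q$ be a polyhedral partially ordered abelian group and let $M$ be a downset-finite $Q$-module. Then $M$ admits a primary decomposition, i.e., there exist finitely many submodules $M_1,\dots,M_r\subseteq M$ such that each quotient $M/M_i$ is coprimary and the natural map $M\to\bigoplus_{i=1}^r M/M_i$ is injective.
   Context: A partially ordered abelian group is an abelian group $Q$ generated by a submonoid $Q_+$ (the positive cone) whose only unit is $0$; the order is $q\preceq q'$ iff $q'-q\in Q_+$. A face of $Q$ (or of $Q_+$) is a submonoid $\sigma\subseteq Q_+$ such that $Q_+\setminus\sigma$ is an ideal of the monoid $Q_+$ (i.e. $(Q_+\setminus\sigma)+Q_+\subseteq Q_+\setminus\sigma$). $Q$ is polyhedral if $Q_+$ has only finitely many faces. A $Q$-module is a $Q$-graded vector space $M=\bigoplus_{q\in Q}M_q$ over a field $k$ with linear maps $M_q\to M_{q'}$ for $q\preceq q'$, compatible with composition (identity for $q=q'$); equivalently a $Q$-graded module over the monoid algebra $k[Q_+]$. Homomorphisms are degree-preserving linear maps commuting with these structure maps. A downset $D\subseteq Q$ is a subset with $D-Q_+=D$; the downset module $k[D]$ has $k$ in each degree $q\in D$, $0$ elsewhere, identity structure maps between degrees in $D$ (it is a quotient of $k[Q]$). A downset hull of $M$ is an injection $M\hookrightarrow\bigoplus_{j\in J}E_j$ with each $E_j$ a downset module; $M$ is downset-finite if it admits such a hull with $J$ finite. For a face $\tau$, $\mathbb Z\tau$ is the subgroup generated by $\tau$, and the localization of $M$ along $\tau$ is $M_\tau=M\otimes_{k[Q_+]}k[Q_++\mathbb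 Z\tau]$, with natural map $M\to M_\tau$. The submodule of $M$ globally supported on $\tau$ is $\Gamma_\tau M=\bigcap_{\tau'\not\subseteq\tau}\ker(M\to M_{\tau'})$, the intersection over faces $\tau'$ not contained in $\tau$. A module $M$ (over polyhedral $Q$) is coprimary (more precisely $\tau$-coprimary) if for some face $\tau$ the map $M\to M_\tau$ is injective and $\Gamma_\tau(M_\tau)$ is an essential submodule of $M_\tau$ (every nonzero submodule of $M_\tau$ meets it nontrivially). *)

theory Defs
  imports "HOL-Algebra.Module"
begin

text \<open>A partially ordered abelian group is an abelian group (a type of class ab_group_add)
  together with its positive cone P: a submonoid generating the group whose only unit is 0.\<close>

definition pogroup :: "'q::ab_group_add set \<Rightarrow> bool" where
  "pogroup P \<longleftrightarrow> 0 \<in> P \<and> (\<forall>a\<in>P. \<forall>b\<in>P. a + b \<in> P)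
     \<and> (\<forall>q. \<exists>a\<in>P. \<exists>b\<in>P. q = a - b)
     \<and> (\<forall>a\<in>P. - a \<in> P \<longrightarrow> a = 0)"

definition qle :: "'q::ab_group_add set \<Rightarrow> 'q \<Rightarrow> 'q \<Rightarrow> bool" where
  "qle P q q' \<longleftrightarrow> q' - q \<in> P"

definition face :: "'q::ab_group_add set \<Rightarrow> 'q set \<Rightarrow> bool" where
  "face P \<sigma> \<longleftrightarrow> \<sigma> \<subseteq> P \<and> 0 \<in> \<sigma> \<and> (\<forall>a\<in>\<sigma>. \<forall>b\<in>\<sigma>. a + b \<in> \<sigma>)
     \<and> (\<forall>a\<in>P - \<sigma>. \<forall>b\<in>P. a + b \<in> P - \<sigma>)"

definition polyhedral :: "'q::ab_group_add set \<Rightarrow> bool" where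
  "polyhedral P \<longleftrightarrow> pogroup P \<and> finite {\<sigma>. face P \<sigma>}"

record ('q, 'a, 'v) qmod =
  space :: "'q \<Rightarrow> ('a, 'v) module"
  trans :: "'q \<Rightarrow> 'q \<Rightarrow> 'v \<Rightarrow> 'v"

definition linmap :: "('a, 'c) ring_scheme \<Rightarrow> ('a, 'v) module \<Rightarrow> ('a, 'w) module \<Rightarrow> ('v \<Rightarrow> 'w) \<Rightarrow> bool" where
  "linmap R V W f \<longleftrightarrow> f \<in> carrier V \<rightarrow> carrier W
     \<and> (\<forall>x\<in>carrier V. \<forall>y\<in>carrier V. f (add V x y) = add W (f x) (f y))
     \<and> (\<forall>a\<in>carrier R. \<forall>x\<in>carrier V. f (smult V a x) = smult W a (f x))"

definition qmodule :: "'q::ab_group_add set \<Rightarrow> ('a, 'c) ring_scheme \<Rightarrow> ('q, 'a, 'v) qmod \<Rightarrow> bool" where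
  "qmodule P R M \<longleftrightarrow> (\<forall>q. module R (space M q))
     \<and> (\<forall>q q'. qle P q q' \<longrightarrow> linmap R (space M q) (space M q') (trans M q q'))
     \<and> (\<forall>q. \<forall>m\<in>carrier (space M q). trans M q q m = m)
     \<and> (\<forall>q q' q'' m. qle P q q' \<and> qle P q' q'' \<and> m \<in> carrier (space M q)
          \<longrightarrow> trans M q' q'' (trans M q q' m) = trans M q q'' m)"

definition qhom :: "'q::ab_group_add set \<Rightarrow> ('a, 'c) ring_scheme \<Rightarrow> ('q, 'a, 'v) qmod
    \<Rightarrow> ('q, 'a, 'w) qmod \<Rightarrow> ('q \<Rightarrow> 'v \<Rightarrow> 'w) \<Rightarrow> bool" where
  "qhom P R M N \<phi> \<longleftrightarrow> (\<forall>q. linmap R (space M q) (space N q) (\<phi> q))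
     \<and> (\<forall>q q' m. qle P q q' \<and> m \<in> carrier (space M q)
          \<longrightarrow> \<phi> q' (trans M q q' m) = trans N q q' (\<phi> q m))"

definition qsubmodule :: "'q::ab_group_add set \<Rightarrow> ('a, 'c) ring_scheme \<Rightarrow> ('q, 'a, 'v) qmod
    \<Rightarrow> ('q \<Rightarrow> 'v set) \<Rightarrow> bool" where
  "qsubmodule P R M N \<longleftrightarrow> (\<forall>q. N q \<subseteq> carrier (space M q) \<and> submodule (N q) R (space M q))
     \<and> (\<forall>q q'. qle P q q' \<longrightarrow> trans M q q' ` N q \<subseteq> N q')"

definition qnonzero :: "('q, 'a, 'v) qmod \<Rightarrow> ('q \<Rightarrow> 'v set) \<Rightarrow> bool" where
  "qnonzero M N \<longleftrightarrow> (\<exists>q. \<exists>x\<in>N q. x \<noteq> zero (space M q))"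

definition essential :: "'q::ab_group_add set \<Rightarrow> ('a, 'c) ring_scheme \<Rightarrow> ('q, 'a, 'v) qmod
    \<Rightarrow> ('q \<Rightarrow> 'v set) \<Rightarrow> bool" where
  "essential P R M N \<longleftrightarrow> qsubmodule P R M N
     \<and> (\<forall>S. qsubmodule P R M S \<and> qnonzero M S \<longrightarrow> qnonzero M (\<lambda>q. S q \<inter> N q))"

definition qcls :: "('q, 'a, 'v) qmod \<Rightarrow> ('q \<Rightarrow> 'v set) \<Rightarrow> 'q \<Rightarrow> 'v \<Rightarrow> 'v set" where
  "qcls M N q m = (\<lambda>n. add (space M q) n m) ` N q"

definition quot :: "('q, 'a, 'v) qmod \<Rightarrow> ('q \<Rightarrow> 'v set) \<Rightarrow> ('q, 'a, 'v set) qmod" where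
  "quot M N = \<lparr> space = (\<lambda>q.
       \<lparr> carrier = qcls M N q ` carrier (space M q),
         mult = undefined, one = undefined,
         zero = qcls M N q (zero (space M q)),
         add = (\<lambda>x y. qcls M N q (add (space M q) (SOME m. m \<in> x) (SOME m. m \<in> y))),
         smult = (\<lambda>a x. qcls M N q (smult (space M q) a (SOME m. m \<in> x))) \<rparr>),
     trans = (\<lambda>q q' x. qcls M N q' (trans M q q' (SOME m. m \<in> x))) \<rparr>"

text \<open>M_tau = M tensor k[Q_+ + Z tau], realized degreewise as the direct limit:
  (M_tau)_q = colim over f in tau of M_(q+f).  An element is the class of a pair (f, m)
  with f in tau and m in M_(q+f) (thought of as m / x^f).\<close>

definition locpairs :: "('q::ab_group_add, 'a, 'v) qmod \<Rightarrow> 'q set \<Rightarrow> 'q \<Rightarrow> ('q \<times> 'v) set" where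
  "locpairs M \<tau> q = {(f, m). f \<in> \<tau> \<and> m \<in> carrier (space M (q + f))}"

definition loceq :: "('q::ab_group_add, 'a, 'v) qmod \<Rightarrow> 'q set \<Rightarrow> 'q \<Rightarrow> 'q \<times> 'v \<Rightarrow> 'q \<times> 'v \<Rightarrow> bool" where
  "loceq M \<tau> q x y \<longleftrightarrow> (\<exists>h\<in>\<tau>.
      trans M (q + fst x) (q + fst x + fst y + h) (snd x)
    = trans M (q + fst y) (q + fst x + fst y + h) (snd y))"

definition loccls :: "('q::ab_group_add, 'a, 'v) qmod \<Rightarrow> 'q set \<Rightarrow> 'q \<Rightarrow> 'q \<times> 'v \<Rightarrow> ('q \<times> 'v) set" where
  "loccls M \<tau> q x = {y \<in> locpairs M \<tau> q. loceq M \<tau> q x y}"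

definition loc :: "('q::ab_group_add, 'a, 'v) qmod \<Rightarrow> 'q set \<Rightarrow> ('q, 'a, ('q \<times> 'v) set) qmod" where
  "loc M \<tau> = \<lparr> space = (\<lambda>q.
       \<lparr> carrier = loccls M \<tau> q ` locpairs M \<tau> q,
         mult = undefined, one = undefined,
         zero = loccls M \<tau> q (0, zero (space M q)),
         add = (\<lambda>x y. let (f, m) = (SOME p. p \<in> x); (g, n) = (SOME p. p \<in> y) in
                 loccls M \<tau> q (f + g, add (space M (q + f + g))
                     (trans M (q + f) (q + f + g) m) (trans M (q + g) (q + f + g) n))),
         smult = (\<lambda>a x. let (f, m) = (SOME p. p \<in> x) in
                 loccls M \<tau> q (f, smult (space M (q + f)) a m)) \<rparr>),
     trans = (\<lambda>q q' x. let (f, m) = (SOME p. p \<in> x) in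
                 loccls M \<tau> q' (f, trans M (q + f) (q' + f) m)) \<rparr>"

definition locmap :: "('q::ab_group_add, 'a, 'v) qmod \<Rightarrow> 'q set \<Rightarrow> 'q \<Rightarrow> 'v \<Rightarrow> ('q \<times> 'v) set" where
  "locmap M \<tau> q m = loccls M \<tau> q (0, m)"

definition Gamma :: "'q::ab_group_add set \<Rightarrow> ('q, 'a, 'v) qmod \<Rightarrow> 'q set \<Rightarrow> 'q \<Rightarrow> 'v set" where
  "Gamma P M \<tau> q = {m \<in> carrier (space M q). \<forall>\<tau>'. face P \<tau>' \<and> \<not> \<tau>' \<subseteq> \<tau>
       \<longrightarrow> locmap M \<tau>' q m = zero (space (loc M \<tau>') q)}"

definition coprimary :: "'q::ab_group_add set \<Rightarrow> ('a, 'c) ring_scheme \<Rightarrow> ('q, 'a, 'v) qmod \<Rightarrow> bool" where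
  "coprimary P R M \<longleftrightarrow> (\<exists>\<tau>. face P \<tau>
     \<and> (\<forall>q. inj_on (locmap M \<tau> q) (carrier (space M q)))
     \<and> essential P R (loc M \<tau>) (Gamma P (loc M \<tau>) \<tau>))"

definition downset :: "'q::ab_group_add set \<Rightarrow> 'q set \<Rightarrow> bool" where
  "downset P D \<longleftrightarrow> {d - p | d p. d \<in> D \<and> p \<in> P} = D"

definition dmod :: "('a, 'c) ring_scheme \<Rightarrow> 'q set \<Rightarrow> ('q, 'a, 'a) qmod" where
  "dmod R D = \<lparr> space = (\<lambda>q.
       \<lparr> carrier = (if q \<in> D then carrier R else {zero R}),
         mult = undefined, one = undefined,
         zero = zero R, add = add R, smult = mult R \<rparr>),
     trans = (\<lambda>q q' x. if q' \<in> D then x else zero R) \<rparr>"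

definition dsum :: "'j set \<Rightarrow> ('j \<Rightarrow> ('q, 'a, 'v) qmod) \<Rightarrow> ('q, 'a, 'j \<Rightarrow> 'v) qmod" where
  "dsum J E = \<lparr> space = (\<lambda>q.
       \<lparr> carrier = (\<Pi>\<^sub>E j\<in>J. carrier (space (E j) q)),
         mult = undefined, one = undefined,
         zero = (\<lambda>j\<in>J. zero (space (E j) q)),
         add = (\<lambda>x y. \<lambda>j\<in>J. add (space (E j) q) (x j) (y j)),
         smult = (\<lambda>a x. \<lambda>j\<in>J. smult (space (E j) q) a (x j)) \<rparr>),
     trans = (\<lambda>q q' x. \<lambda>j\<in>J. trans (E j) q q' (x j)) \<rparr>"

definition downset_finite :: "'q::ab_group_add set \<Rightarrow> ('a, 'c) ring_scheme \<Rightarrow> ('q, 'a, 'v) qmod \<Rightarrow> bool" where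
  "downset_finite P R M \<longleftrightarrow> (\<exists>(J :: nat set) D \<phi>. finite J \<and> (\<forall>j\<in>J. downset P (D j))
     \<and> qhom P R M (dsum J (\<lambda>j. dmod R (D j))) \<phi>
     \<and> (\<forall>q. inj_on (\<phi> q) (carrier (space M q))))"

end

theory Submission
  imports Defs
begin


definition vstruct :: "('a,'c) ring_scheme \<Rightarrow> ('a,'w) module \<Rightarrow> ('w \<Rightarrow> 'a) \<Rightarrow> bool" where
 "vstruct R V v \<longleftrightarrow> (\<forall>x\<in>carrier V. v x \<in> carrier R) \<and> inj_on v (carrier V)
   \<and> zero V \<in> carrier V \<and> v (zero V) = zero R
   \<and> (\<forall>x\<in>carrier V. \<forall>y\<in>carrier V. add V x y \<in> carrier V \<and> v (add V x y) = add R (v x) (v y))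
   \<and> (\<forall>a\<in>carrier R. \<forall>x\<in>carrier V. smult V a x \<in> carrier V \<and> v (smult V a x) = mult R a (v x))"

lemma vstruct_module:
  assumes cr: "cring R" and vs: "vstruct R V v"
  shows "module R V"
proof -
  interpret R: cring R by (rule cr)
  have vc: "\<And>x. x \<in> carrier V \<Longrightarrow> v x \<in> carrier R" using vs unfolding vstruct_def by blast
  have inj: "inj_on v (carrier V)" using vs unfolding vstruct_def by blast
  have z: "zero V \<in> carrier V" "v (zero V) = zero R" using vs unfolding vstruct_def by blast+
  have ad: "\<And>x y. x \<in> carrier V \<Longrightarrow> y \<in> carrier V \<Longrightarrow> add V x y \<in> carrier V \<and> v (add V x y) = add R (v x) (v y)"
    using vs unfolding vstruct_def by blast
  have sm: "\<And>a x. a \<in> carrier R \<Longrightarrow> x \<in> carrier V \<Longrightarrow> smult V a x \<in> carrier V \<and> v (smult V a x) = mult R a (v x)"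
    using vs unfolding vstruct_def by blast
  note eq = inj_onD[OF inj]
  show ?thesis
  proof (rule moduleI[OF cr])
    show "abelian_group V"
    proof (rule abelian_groupI)
      fix x y z assume xyz: "x \<in> carrier V" "y \<in> carrier V" "z \<in> carrier V"
      show "add V (add V x y) z = add V x (add V y z)"
        by (rule eq) (use xyz ad vc in \<open>simp_all add: R.a_assoc\<close>)
    next
      fix x y assume xy: "x \<in> carrier V" "y \<in> carrier V"
      show "add V x y = add V y x"
        by (rule eq) (use xy ad vc in \<open>simp_all add: R.a_comm\<close>)
    next
      fix x assume x: "x \<in> carrier V"
      show "add V (zero V) x = x"
        by (rule eq) (use x ad vc z in \<open>simp_all\<close>)
    next
      fix x assume x: "x \<in> carrier V"
      show "\<exists>y\<in>carrier V. add V y x = zero V"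
      proof (intro bexI)
        show "smult V (a_inv R (one R)) x \<in> carrier V" using sm x by simp
        show "add V (smult V (a_inv R (one R)) x) x = zero V"
          by (rule eq) (use x ad vc z sm in \<open>simp_all add: R.l_minus R.l_neg\<close>)
      qed
    qed (use ad z in auto)
  next
    fix a x assume "a \<in> carrier R" "x \<in> carrier V" then show "smult V a x \<in> carrier V" using sm by simp
  next
    fix a b x assume h: "a \<in> carrier R" "b \<in> carrier R" "x \<in> carrier V"
    show "smult V (add R a b) x = add V (smult V a x) (smult V b x)"
      by (rule eq) (use h ad vc sm in \<open>simp_all add: R.l_distr\<close>)
  next
    fix a x y assume h: "a \<in> carrier R" "x \<in> carrier V" "y \<in> carrier V"
    show "smult V a (add V x y) = add V (smult V a x) (smult V a y)"
      by (rule eq) (use h ad vc sm in \<open>simp_all add: R.r_distr\<close>)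
  next
    fix a b x assume h: "a \<in> carrier R" "b \<in> carrier R" "x \<in> carrier V"
    show "smult V (mult R a b) x = smult V a (smult V b x)"
      by (rule eq) (use h ad vc sm in \<open>simp_all add: R.m_assoc\<close>)
  next
    fix x assume h: "x \<in> carrier V"
    show "smult V (one R) x = x"
      by (rule eq) (use h ad vc sm in \<open>simp_all\<close>)
  qed
qed

definition dclosed :: "'q::ab_group_add set \<Rightarrow> 'q set \<Rightarrow> bool" where
  "dclosed P E \<longleftrightarrow> (\<forall>p q. qle P p q \<longrightarrow> q \<in> E \<longrightarrow> p \<in> E)"

definition vqmod :: "'q::ab_group_add set \<Rightarrow> ('a,'c) ring_scheme \<Rightarrow> 'q set \<Rightarrow> ('q,'a,'w) qmod \<Rightarrow> ('q \<Rightarrow> 'w \<Rightarrow> 'a) \<Rightarrow> bool" where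
  "vqmod P R E A av \<longleftrightarrow> (\<forall>q. vstruct R (space A q) (av q))
     \<and> (\<forall>q. \<forall>x\<in>carrier (space A q). av q x \<noteq> zero R \<longrightarrow> q \<in> E)
     \<and> (\<forall>q q'. \<forall>x\<in>carrier (space A q). qle P q q' \<longrightarrow> trans A q q' x \<in> carrier (space A q')
          \<and> av q' (trans A q q' x) = (if q' \<in> E then av q x else zero R))"

lemma vq_vs: "vqmod P R E A av \<Longrightarrow> vstruct R (space A q) (av q)"
  unfolding vqmod_def by blast
lemma vq_supp: "vqmod P R E A av \<Longrightarrow> x \<in> carrier (space A q) \<Longrightarrow> av q x \<noteq> zero R \<Longrightarrow> q \<in> E"
  unfolding vqmod_def by blast
lemma vq_trans: "vqmod P R E A av \<Longrightarrow> x \<in> carrier (space A q) \<Longrightarrow> qle P q q' \<Longrightarrow>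
   trans A q q' x \<in> carrier (space A q') \<and> av q' (trans A q q' x) = (if q' \<in> E then av q x else zero R)"
  unfolding vqmod_def by blast
lemma vq_inj: "vqmod P R E A av \<Longrightarrow> x \<in> carrier (space A q) \<Longrightarrow> y \<in> carrier (space A q) \<Longrightarrow>
   av q x = av q y \<Longrightarrow> x = y"
  unfolding vqmod_def vstruct_def by (meson inj_onD)
lemma vq_carr: "vqmod P R E A av \<Longrightarrow> x \<in> carrier (space A q) \<Longrightarrow> av q x \<in> carrier R"
  unfolding vqmod_def vstruct_def by blast
lemma vq_zero: "vqmod P R E A av \<Longrightarrow> zero (space A q) \<in> carrier (space A q) \<and> av q (zero (space A q)) = zero R"
  unfolding vqmod_def vstruct_def by blast

lemma pg_add: "pogroup P \<Longrightarrow> a \<in> P \<Longrightarrow> b \<in> P \<Longrightarrow> a + b \<in> P"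
  unfolding pogroup_def by blast
lemma pg_zero: "pogroup P \<Longrightarrow> 0 \<in> P"
  unfolding pogroup_def by blast
lemma face_sub: "face P s \<Longrightarrow> x \<in> s \<Longrightarrow> x \<in> P"
  unfolding face_def by blast
lemma face_add: "face P s \<Longrightarrow> a \<in> s \<Longrightarrow> b \<in> s \<Longrightarrow> a + b \<in> s"
  unfolding face_def by blast
lemma face_zero: "face P s \<Longrightarrow> 0 \<in> s"
  unfolding face_def by blast
lemma qle_plus: "x \<in> P \<Longrightarrow> qle P q (q + x)"
  unfolding qle_def by simp
lemma qle_plus2: "x \<in> P \<Longrightarrow> q' = q + x \<Longrightarrow> qle P q q'"
  unfolding qle_def by simp
lemma dclosedD: "dclosed P E \<Longrightarrow> qle P p q \<Longrightarrow> q \<in> E \<Longrightarrow> p \<in> E"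
  unfolding dclosed_def by blast

context
  fixes P :: "'q::ab_group_add set" and R :: "('a,'c) ring_scheme" and E :: "'q set"
    and A :: "('q,'a,'w) qmod" and av and \<sigma> :: "'q set"
  assumes pg: "pogroup P" and fc: "face P \<sigma>" and dc: "dclosed P E" and vq: "vqmod P R E A av"
begin

lemma loceq_char:
  assumes "(f,x) \<in> locpairs A \<sigma> q" "(g,y) \<in> locpairs A \<sigma> q"
  shows "loceq A \<sigma> q (f,x) (g,y) \<longleftrightarrow> (\<exists>h\<in>\<sigma>. q+f+g+h \<in> E \<longrightarrow> av (q+f) x = av (q+g) y)"
proof -
  have f: "f \<in> \<sigma>" and x: "x \<in> carrier (space A (q+f))" and g: "g \<in> \<sigma>" and y: "y \<in> carrier (space A (q+g))"
    using assms unfolding locpairs_def by auto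
  have key: "trans A (q+f) (q+f+g+h) x = trans A (q+g) (q+f+g+h) y
     \<longleftrightarrow> (q+f+g+h \<in> E \<longrightarrow> av (q+f) x = av (q+g) y)" if h: "h \<in> \<sigma>" for h
  proof -
    have l1: "qle P (q+f) (q+f+g+h)"
      by (rule qle_plus2[where x="g+h"]) (use pg_add[OF pg face_sub[OF fc g] face_sub[OF fc h]] in \<open>auto simp: algebra_simps\<close>)
    have l2: "qle P (q+g) (q+f+g+h)"
      by (rule qle_plus2[where x="f+h"]) (use pg_add[OF pg face_sub[OF fc f] face_sub[OF fc h]] in \<open>auto simp: algebra_simps\<close>)
    note t1 = vq_trans[OF vq x l1] and t2 = vq_trans[OF vq y l2]
    show ?thesis
    proof
      assume "trans A (q+f) (q+f+g+h) x = trans A (q+g) (q+f+g+h) y"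
      then show "(q+f+g+h \<in> E \<longrightarrow> av (q+f) x = av (q+g) y)" using t1 t2 by (metis (full_types))
    next
      assume "(q+f+g+h \<in> E \<longrightarrow> av (q+f) x = av (q+g) y)"
      then show "trans A (q+f) (q+f+g+h) x = trans A (q+g) (q+f+g+h) y"
        using t1 t2 by (intro vq_inj[OF vq]) auto
    qed
  qed
  show ?thesis unfolding loceq_def using key by simp
qed

lemma loceq_refl: "loceq A \<sigma> q p p"
  unfolding loceq_def using face_zero[OF fc] by blast

lemma locmap_zero_iff:
  assumes x: "x \<in> carrier (space A q)"
  shows "locmap A \<sigma> q x = zero (space (loc A \<sigma>) q) \<longleftrightarrow> (av q x = zero R \<or> (\<exists>h\<in>\<sigma>. q+h \<notin> E))"
proof -
  define z where "z = zero (space A q)"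
  have z: "z \<in> carrier (space A q)" "av q z = zero R" using vq_zero[OF vq] unfolding z_def by auto
  have px: "(0,x) \<in> locpairs A \<sigma> q" and pz: "(0,z) \<in> locpairs A \<sigma> q"
    using x z face_zero[OF fc] unfolding locpairs_def by auto
  have lhs: "locmap A \<sigma> q x = zero (space (loc A \<sigma>) q) \<longleftrightarrow> loccls A \<sigma> q (0,x) = loccls A \<sigma> q (0,z)"
    unfolding locmap_def loc_def z_def by simp
  show ?thesis unfolding lhs
  proof
    assume "loccls A \<sigma> q (0,x) = loccls A \<sigma> q (0,z)"
    moreover have "(0,z) \<in> loccls A \<sigma> q (0,z)" using pz loceq_refl unfolding loccls_def by blast
    ultimately have "loceq A \<sigma> q (0,x) (0,z)" unfolding loccls_def by blast
    then obtain h where "h \<in> \<sigma>" "q+0+0+h \<in> E \<longrightarrow> av (q+0) x = av (q+0) z"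
      using loceq_char[OF px pz] by blast
    then show "av q x = zero R \<or> (\<exists>h\<in>\<sigma>. q+h \<notin> E)" using z by auto
  next
    assume H: "av q x = zero R \<or> (\<exists>h\<in>\<sigma>. q+h \<notin> E)"
    have "loceq A \<sigma> q (0,x) p \<longleftrightarrow> loceq A \<sigma> q (0,z) p" if p: "p \<in> locpairs A \<sigma> q" for p
    proof -
      obtain g y where gy: "p = (g,y)" by (cases p)
      have g: "g \<in> P" using p face_sub[OF fc] unfolding gy locpairs_def by auto
      show ?thesis
      proof (cases "av q x = zero R")
        case True
        then show ?thesis unfolding gy using loceq_char[OF px p[unfolded gy]] loceq_char[OF pz p[unfolded gy]] z by simp
      next
        case False
        then obtain h0 where h0: "h0 \<in> \<sigma>" "q+h0 \<notin> E" using H by blast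
        have "q+0+g+h0 \<notin> E"
        proof
          assume "q+0+g+h0 \<in> E"
          moreover have "qle P (q+h0) (q+0+g+h0)" by (rule qle_plus2[OF g]) (simp add: algebra_simps)
          ultimately show False using h0 dclosedD[OF dc] by blast
        qed
        then show ?thesis unfolding gy using loceq_char[OF px p[unfolded gy]] loceq_char[OF pz p[unfolded gy]] h0 by blast
      qed
    qed
    then show "loccls A \<sigma> q (0,x) = loccls A \<sigma> q (0,z)" unfolding loccls_def by blast
  qed
qed

end

definition lval :: "('q::ab_group_add \<Rightarrow> 'w \<Rightarrow> 'a) \<Rightarrow> 'q \<Rightarrow> 'q \<times> 'w \<Rightarrow> 'a" where
  "lval av q p = av (q + fst p) (snd p)"

context
  fixes P :: "'q::ab_group_add set" and R :: "('a,'c) ring_scheme" and E :: "'q set"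
    and A :: "('q,'a,'w) qmod" and av and \<sigma> :: "'q set"
  assumes pg: "pogroup P" and fc: "face P \<sigma>" and dc: "dclosed P E" and vq: "vqmod P R E A av"
    and cl: "\<And>q f. q \<in> E \<Longrightarrow> f \<in> \<sigma> \<Longrightarrow> q + f \<in> E"
begin

lemma sP: "f \<in> \<sigma> \<Longrightarrow> f \<in> P" using face_sub[OF fc] by blast

lemma av_trans_cl:
  assumes x: "x \<in> carrier (space A p)" and l: "qle P p p'" and c: "p \<in> E \<Longrightarrow> p' \<in> E"
  shows "trans A p p' x \<in> carrier (space A p') \<and> av p' (trans A p p' x) = av p x"
  using vq_trans[OF vq x l] vq_supp[OF vq x] c by (cases "av p x = zero R") auto

lemma loceq_char2:
  assumes p1: "p1 \<in> locpairs A \<sigma> q" and p2: "p2 \<in> locpairs A \<sigma> q"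
  shows "loceq A \<sigma> q p1 p2 \<longleftrightarrow> lval av q p1 = lval av q p2"
proof -
  obtain f x g y where e: "p1 = (f,x)" "p2 = (g,y)" by (cases p1, cases p2)
  have f: "f \<in> \<sigma>" and x: "x \<in> carrier (space A (q+f))" and g: "g \<in> \<sigma>" and y: "y \<in> carrier (space A (q+g))"
    using p1 p2 unfolding e locpairs_def by auto
  have "(\<exists>h\<in>\<sigma>. q+f+g+h \<in> E \<longrightarrow> av (q+f) x = av (q+g) y) \<longleftrightarrow> av (q+f) x = av (q+g) y"
  proof
    assume "\<exists>h\<in>\<sigma>. q+f+g+h \<in> E \<longrightarrow> av (q+f) x = av (q+g) y"
    then obtain h where h: "h \<in> \<sigma>" and hh: "q+f+g+h \<in> E \<longrightarrow> av (q+f) x = av (q+g) y" by blast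
    show "av (q+f) x = av (q+g) y"
    proof (cases "q+f+g+h \<in> E")
      case True then show ?thesis using hh by blast
    next
      case False
      have "q+f \<notin> E" using cl[of "q+f" "g+h"] face_add[OF fc g h] False by (auto simp: algebra_simps)
      moreover have "q+g \<notin> E" using cl[of "q+g" "f+h"] face_add[OF fc f h] False by (auto simp: algebra_simps)
      ultimately show ?thesis using vq_supp[OF vq x] vq_supp[OF vq y] by metis
    qed
  next
    assume "av (q+f) x = av (q+g) y"
    then show "\<exists>h\<in>\<sigma>. q+f+g+h \<in> E \<longrightarrow> av (q+f) x = av (q+g) y" using face_zero[OF fc] by blast
  qed
  then show ?thesis unfolding e loceq_char[OF pg fc dc vq p1[unfolded e] p2[unfolded e]] lval_def by simp
qed

lemma loccls_char:
  assumes p: "p \<in> locpairs A \<sigma> q"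
  shows "loccls A \<sigma> q p = {p' \<in> locpairs A \<sigma> q. lval av q p' = lval av q p}"
  unfolding loccls_def
  using loceq_char2[OF p] by (metis (no_types, lifting))

definition "lv q X = lval av q (SOME p. p \<in> X)"

lemma lv_cls:
  assumes p: "p \<in> locpairs A \<sigma> q"
  shows "loccls A \<sigma> q p \<in> carrier (space (loc A \<sigma>) q)" "lv q (loccls A \<sigma> q p) = lval av q p"
    "(SOME p'. p' \<in> loccls A \<sigma> q p) \<in> locpairs A \<sigma> q"
proof -
  show "loccls A \<sigma> q p \<in> carrier (space (loc A \<sigma>) q)" using p unfolding loc_def by simp
  have "p \<in> loccls A \<sigma> q p" using p loccls_char[OF p] by simp
  then have "(SOME p'. p' \<in> loccls A \<sigma> q p) \<in> loccls A \<sigma> q p" by (rule someI)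
  then show "lv q (loccls A \<sigma> q p) = lval av q p" "(SOME p'. p' \<in> loccls A \<sigma> q p) \<in> locpairs A \<sigma> q"
    unfolding lv_def using loccls_char[OF p] by auto
qed

lemma loc_carrierE:
  assumes "X \<in> carrier (space (loc A \<sigma>) q)"
  obtains p where "p \<in> locpairs A \<sigma> q" "X = loccls A \<sigma> q p"
  using assms unfolding loc_def by auto

lemma lv_inj:
  assumes "p1 \<in> locpairs A \<sigma> q" "p2 \<in> locpairs A \<sigma> q" "lval av q p1 = lval av q p2"
  shows "loccls A \<sigma> q p1 = loccls A \<sigma> q p2"
  using assms loccls_char by simp

lemma locmap_inj: "inj_on (locmap A \<sigma> q) (carrier (space A q))"
proof (rule inj_onI)
  fix x y assume x: "x \<in> carrier (space A q)" and y: "y \<in> carrier (space A q)"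
    and e: "locmap A \<sigma> q x = locmap A \<sigma> q y"
  have px: "(0,x) \<in> locpairs A \<sigma> q" and py: "(0,y) \<in> locpairs A \<sigma> q"
    using x y face_zero[OF fc] unfolding locpairs_def by auto
  have "lval av q (0,x) = lval av q (0,y)"
    using lv_cls(2)[OF px] lv_cls(2)[OF py] e unfolding locmap_def by metis
  then show "x = y" using vq_inj[OF vq x y] by (simp add: lval_def)
qed

lemma loc_carrier_some:
  assumes X: "X \<in> carrier (space (loc A \<sigma>) q)"
  obtains f m where "(SOME p. p \<in> X) = (f,m)" "f \<in> \<sigma>" "m \<in> carrier (space A (q+f))"
    "lv q X = av (q+f) m" "X = loccls A \<sigma> q (f,m)"
proof -
  obtain p where p: "p \<in> locpairs A \<sigma> q" "X = loccls A \<sigma> q p" using loc_carrierE[OF X] by blast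
  obtain f m where fm: "(SOME p. p \<in> X) = (f,m)" by (cases "SOME p. p \<in> X")
  have i: "(f,m) \<in> locpairs A \<sigma> q" using lv_cls(3)[OF p(1)] fm p(2) by simp
  have "lv q X = lval av q (f,m)" using fm unfolding lv_def by simp
  moreover have "lv q X = lval av q p" using lv_cls(2)[OF p(1)] p(2) by simp
  ultimately have "X = loccls A \<sigma> q (f,m)" using lv_inj[OF p(1) i] p(2) by simp
  then show ?thesis using that fm i \<open>lv q X = lval av q (f,m)\<close> unfolding locpairs_def lval_def by auto
qed

lemma lval_carr: "p \<in> locpairs A \<sigma> q \<Longrightarrow> lval av q p \<in> carrier R"
  unfolding locpairs_def lval_def using vq_carr[OF vq] by auto

lemma loc_add:
  assumes X: "X \<in> carrier (space (loc A \<sigma>) q)" and Y: "Y \<in> carrier (space (loc A \<sigma>) q)"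
  shows "add (space (loc A \<sigma>) q) X Y \<in> carrier (space (loc A \<sigma>) q)
     \<and> lv q (add (space (loc A \<sigma>) q) X Y) = add R (lv q X) (lv q Y)"
proof -
  obtain f m where fm: "(SOME p. p \<in> X) = (f,m)" "f \<in> \<sigma>" "m \<in> carrier (space A (q+f))" "lv q X = av (q+f) m"
    using loc_carrier_some[OF X] by metis
  obtain g n where gn: "(SOME p. p \<in> Y) = (g,n)" "g \<in> \<sigma>" "n \<in> carrier (space A (q+g))" "lv q Y = av (q+g) n"
    using loc_carrier_some[OF Y] by metis
  have l1: "qle P (q+f) (q+f+g)" by (rule qle_plus[OF sP[OF gn(2)]])
  have l2: "qle P (q+g) (q+f+g)" by (rule qle_plus2[OF sP[OF fm(2)]]) (simp add: algebra_simps)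
  have t1: "trans A (q+f) (q+f+g) m \<in> carrier (space A (q+f+g)) \<and> av (q+f+g) (trans A (q+f) (q+f+g) m) = av (q+f) m"
    by (rule av_trans_cl[OF fm(3) l1]) (use cl gn(2) in blast)
  have t2: "trans A (q+g) (q+f+g) n \<in> carrier (space A (q+f+g)) \<and> av (q+f+g) (trans A (q+g) (q+f+g) n) = av (q+g) n"
    by (rule av_trans_cl[OF gn(3) l2]) (use cl[of "q+g" f] fm(2) in \<open>auto simp: algebra_simps\<close>)
  define w where "w = add (space A (q+f+g)) (trans A (q+f) (q+f+g) m) (trans A (q+g) (q+f+g) n)"
  have w: "w \<in> carrier (space A (q+f+g))" "av (q+f+g) w = add R (av (q+f) m) (av (q+g) n)"
    using vq_vs[OF vq, of "q+f+g"] t1 t2 unfolding w_def vstruct_def by auto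
  have e: "add (space (loc A \<sigma>) q) X Y = loccls A \<sigma> q (f+g, w)"
    unfolding w_def by (simp add: loc_def Let_def fm(1) gn(1))
  have pn: "(f+g, w) \<in> locpairs A \<sigma> q"
    using w face_add[OF fc fm(2) gn(2)] unfolding locpairs_def by (simp add: add.assoc)
  show ?thesis unfolding e using lv_cls[OF pn] w fm(4) gn(4) by (simp add: lval_def add.assoc)
qed

lemma loc_smult:
  assumes a: "a \<in> carrier R" and X: "X \<in> carrier (space (loc A \<sigma>) q)"
  shows "smult (space (loc A \<sigma>) q) a X \<in> carrier (space (loc A \<sigma>) q)
     \<and> lv q (smult (space (loc A \<sigma>) q) a X) = mult R a (lv q X)"
proof -
  obtain f m where fm: "(SOME p. p \<in> X) = (f,m)" "f \<in> \<sigma>" "m \<in> carrier (space A (q+f))" "lv q X = av (q+f) m"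
    using loc_carrier_some[OF X] by metis
  define w where "w = smult (space A (q+f)) a m"
  have w: "w \<in> carrier (space A (q+f))" "av (q+f) w = mult R a (av (q+f) m)"
    using vq_vs[OF vq, of "q+f"] fm(3) a unfolding w_def vstruct_def by auto
  have e: "smult (space (loc A \<sigma>) q) a X = loccls A \<sigma> q (f, w)"
    unfolding w_def by (simp add: loc_def Let_def fm(1))
  have pn: "(f, w) \<in> locpairs A \<sigma> q"
    using w fm(2) unfolding locpairs_def by simp
  show ?thesis unfolding e using lv_cls[OF pn] w fm(4) by (simp add: lval_def)
qed

lemma loc_trans:
  assumes X: "X \<in> carrier (space (loc A \<sigma>) q)" and l: "qle P q q'"
  shows "trans (loc A \<sigma>) q q' X \<in> carrier (space (loc A \<sigma>) q')
     \<and> lv q' (trans (loc A \<sigma>) q q' X) = (if q' \<in> E then lv q X else zero R)"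
proof -
  obtain f m where fm: "(SOME p. p \<in> X) = (f,m)" "f \<in> \<sigma>" "m \<in> carrier (space A (q+f))" "lv q X = av (q+f) m"
    using loc_carrier_some[OF X] by metis
  have l1: "qle P (q+f) (q'+f)" using l unfolding qle_def by (simp add: algebra_simps)
  define w where "w = trans A (q+f) (q'+f) m"
  have w: "w \<in> carrier (space A (q'+f))" "av (q'+f) w = (if q'+f \<in> E then av (q+f) m else zero R)"
    using vq_trans[OF vq fm(3) l1] unfolding w_def by auto
  have e: "trans (loc A \<sigma>) q q' X = loccls A \<sigma> q' (f, w)"
    unfolding w_def by (simp add: loc_def Let_def fm(1))
  have pn: "(f, w) \<in> locpairs A \<sigma> q'"
    using w fm(2) unfolding locpairs_def by simp
  have "av (q'+f) w = (if q' \<in> E then av (q+f) m else zero R)"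
  proof (cases "av (q+f) m = zero R")
    case True then show ?thesis using w by simp
  next
    case False
    then have "q+f \<in> E" using vq_supp[OF vq fm(3)] by blast
    have "q'+f \<in> E \<longleftrightarrow> q' \<in> E"
    proof
      assume "q'+f \<in> E" then show "q' \<in> E" using dclosedD[OF dc qle_plus[OF sP[OF fm(2)]]] by blast
    next
      assume "q' \<in> E" then show "q'+f \<in> E" using cl fm(2) by blast
    qed
    then show ?thesis using w by simp
  qed
  then show ?thesis unfolding e using lv_cls[OF pn] fm(4) by (simp add: lval_def)
qed

lemma loc_vqmod: "vqmod P R E (loc A \<sigma>) lv"
  unfolding vqmod_def
proof (intro conjI allI ballI impI)
  fix q
  show "vstruct R (space (loc A \<sigma>) q) (lv q)"
    unfolding vstruct_def
  proof (intro conjI ballI)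
    fix X assume X: "X \<in> carrier (space (loc A \<sigma>) q)"
    show "lv q X \<in> carrier R" using loc_carrier_some[OF X] vq_carr[OF vq] by metis
  next
    show "inj_on (lv q) (carrier (space (loc A \<sigma>) q))"
    proof (rule inj_onI)
      fix X Y assume X: "X \<in> carrier (space (loc A \<sigma>) q)" and Y: "Y \<in> carrier (space (loc A \<sigma>) q)"
        and e: "lv q X = lv q Y"
      obtain p1 where p1: "p1 \<in> locpairs A \<sigma> q" "X = loccls A \<sigma> q p1" using loc_carrierE[OF X] by blast
      obtain p2 where p2: "p2 \<in> locpairs A \<sigma> q" "Y = loccls A \<sigma> q p2" using loc_carrierE[OF Y] by blast
      show "X = Y" using lv_inj[OF p1(1) p2(1)] lv_cls(2)[OF p1(1)] lv_cls(2)[OF p2(1)] e p1(2) p2(2) by simp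
    qed
  next
    have pz: "(0, zero (space A q)) \<in> locpairs A \<sigma> q"
      using vq_zero[OF vq] face_zero[OF fc] unfolding locpairs_def by auto
    have ez: "zero (space (loc A \<sigma>) q) = loccls A \<sigma> q (0, zero (space A q))" by (simp add: loc_def)
    show "zero (space (loc A \<sigma>) q) \<in> carrier (space (loc A \<sigma>) q)" unfolding ez by (rule lv_cls(1)[OF pz])
    show "lv q (zero (space (loc A \<sigma>) q)) = zero R" unfolding ez lv_cls(2)[OF pz]
      using vq_zero[OF vq] by (simp add: lval_def)
  next
    fix X Y assume "X \<in> carrier (space (loc A \<sigma>) q)" "Y \<in> carrier (space (loc A \<sigma>) q)"
    then show "add (space (loc A \<sigma>) q) X Y \<in> carrier (space (loc A \<sigma>) q)"
      "lv q (add (space (loc A \<sigma>) q) X Y) = add R (lv q X) (lv q Y)" using loc_add by auto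
  next
    fix a X assume "a \<in> carrier R" "X \<in> carrier (space (loc A \<sigma>) q)"
    then show "smult (space (loc A \<sigma>) q) a X \<in> carrier (space (loc A \<sigma>) q)"
      "lv q (smult (space (loc A \<sigma>) q) a X) = mult R a (lv q X)" using loc_smult by auto
  qed
next
  fix q X assume X: "X \<in> carrier (space (loc A \<sigma>) q)" and "lv q X \<noteq> zero R"
  then obtain f m where fm: "f \<in> \<sigma>" "m \<in> carrier (space A (q+f))" "av (q+f) m \<noteq> zero R"
    using loc_carrier_some[OF X] by metis
  then have "q+f \<in> E" using vq_supp[OF vq] by blast
  then show "q \<in> E" using dclosedD[OF dc qle_plus[OF sP[OF fm(1)]]] by blast
next
  fix q q' X assume "X \<in> carrier (space (loc A \<sigma>) q)" "qle P q q'"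
  then show "trans (loc A \<sigma>) q q' X \<in> carrier (space (loc A \<sigma>) q')"
    "lv q' (trans (loc A \<sigma>) q q' X) = (if q' \<in> E then lv q X else zero R)" using loc_trans by auto
qed

end

context
  fixes P :: "'q::ab_group_add set" and R :: "('a,'c) ring_scheme" and E :: "'q set"
    and L :: "('q,'a,'w) qmod" and lv and \<tau> :: "'q set"
  assumes cr: "cring R" and pg: "pogroup P" and fc: "face P \<tau>" and dc: "dclosed P E" and vq: "vqmod P R E L lv"
    and good: "\<And>q. q \<in> E \<Longrightarrow> \<exists>g. qle P q g \<and> g \<in> E \<and> (\<forall>\<tau>'. face P \<tau>' \<and> \<not> \<tau>' \<subseteq> \<tau> \<longrightarrow> (\<exists>h\<in>\<tau>'. g+h \<notin> E))"
begin

lemma Gamma_char: "Gamma P L \<tau> q = {X \<in> carrier (space L q). \<forall>\<tau>'. face P \<tau>' \<and> \<not> \<tau>' \<subseteq> \<tau> \<longrightarrow>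
    (lv q X = zero R \<or> (\<exists>h\<in>\<tau>'. q+h \<notin> E))}"
proof -
  have e: "\<And>X \<tau>'. X \<in> carrier (space L q) \<Longrightarrow> face P \<tau>' \<Longrightarrow>
     (locmap L \<tau>' q X = zero (space (loc L \<tau>') q)) = (lv q X = zero R \<or> (\<exists>h\<in>\<tau>'. q+h \<notin> E))"
    by (rule locmap_zero_iff[OF pg _ dc vq])
  show ?thesis unfolding Gamma_def by (simp add: e cong: conj_cong)
qed

lemma Lmod: "module R (space L q)" by (rule vstruct_module[OF cr vq_vs[OF vq]])

lemma ess: "essential P R L (Gamma P L \<tau>)"
proof -
  have vs: "\<And>q. vstruct R (space L q) (lv q)" using vq_vs[OF vq] .
  have ad: "\<And>q x y. x \<in> carrier (space L q) \<Longrightarrow> y \<in> carrier (space L q) \<Longrightarrow> add (space L q) x y \<in> carrier (space L q) \<and> lv q (add (space L q) x y) = add R (lv q x) (lv q y)"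
    using vs unfolding vstruct_def by blast
  have sm: "\<And>q a x. a \<in> carrier R \<Longrightarrow> x \<in> carrier (space L q) \<Longrightarrow> smult (space L q) a x \<in> carrier (space L q) \<and> lv q (smult (space L q) a x) = mult R a (lv q x)"
    using vs unfolding vstruct_def by blast
  interpret R: cring R by (rule cr)
  have sub: "qsubmodule P R L (Gamma P L \<tau>)"
    unfolding qsubmodule_def
  proof (intro conjI allI impI)
    fix q
    show "Gamma P L \<tau> q \<subseteq> carrier (space L q)" unfolding Gamma_char by blast
    interpret V: module R "space L q" by (rule Lmod)
    show "submodule (Gamma P L \<tau> q) R (space L q)"
    proof (rule V.submoduleI)
      show "Gamma P L \<tau> q \<subseteq> carrier (space L q)" unfolding Gamma_char by blast
      show "zero (space L q) \<in> Gamma P L \<tau> q" unfolding Gamma_char using vq_zero[OF vq] by auto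
    next
      fix X assume X: "X \<in> Gamma P L \<tau> q"
      then have Xc: "X \<in> carrier (space L q)" unfolding Gamma_char by blast
      have "lv q (a_inv (space L q) X) = zero R" if z: "lv q X = zero R"
      proof -
        have "lv q (add (space L q) X (a_inv (space L q) X)) = lv q (zero (space L q))" using Xc by (simp add: V.r_neg)
        then have "add R (lv q X) (lv q (a_inv (space L q) X)) = zero R"
          using ad[OF Xc, of "a_inv (space L q) X"] Xc vq_zero[OF vq] by simp
        then show ?thesis using z vq_carr[OF vq, of "a_inv (space L q) X"] Xc by simp
      qed
      then have "lv q (a_inv (space L q) X) = zero R \<or> (\<exists>h\<in>\<tau>'. q+h \<notin> E)" if t: "face P \<tau>'" "\<not> \<tau>' \<subseteq> \<tau>" for \<tau>'
        using X t unfolding Gamma_char by blast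
      moreover have "a_inv (space L q) X \<in> carrier (space L q)" using Xc by simp
      ultimately show "a_inv (space L q) X \<in> Gamma P L \<tau> q" unfolding Gamma_char by blast
    next
      fix X Y assume X: "X \<in> Gamma P L \<tau> q" and Y: "Y \<in> Gamma P L \<tau> q"
      have Xc: "X \<in> carrier (space L q)" and Yc: "Y \<in> carrier (space L q)" using X Y unfolding Gamma_char by auto
      have "lv q (add (space L q) X Y) = zero R \<or> (\<exists>h\<in>\<tau>'. q+h \<notin> E)" if t: "face P \<tau>'" "\<not> \<tau>' \<subseteq> \<tau>" for \<tau>'
      proof -
        have h1: "lv q X = zero R \<or> (\<exists>h\<in>\<tau>'. q+h \<notin> E)" and h2: "lv q Y = zero R \<or> (\<exists>h\<in>\<tau>'. q+h \<notin> E)"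
          using X Y t unfolding Gamma_char by blast+
        show ?thesis
        proof (cases "\<exists>h\<in>\<tau>'. q+h \<notin> E")
          case True then show ?thesis by blast
        next
          case False
          then have "lv q X = zero R" "lv q Y = zero R" using h1 h2 by blast+
          then show ?thesis using ad[OF Xc Yc] by simp
        qed
      qed
      then show "add (space L q) X Y \<in> Gamma P L \<tau> q" unfolding Gamma_char using ad[OF Xc Yc] by blast
    next
      fix a X assume a: "a \<in> carrier R" and X: "X \<in> Gamma P L \<tau> q"
      have Xc: "X \<in> carrier (space L q)" using X unfolding Gamma_char by auto
      have "lv q (smult (space L q) a X) = zero R \<or> (\<exists>h\<in>\<tau>'. q+h \<notin> E)" if t: "face P \<tau>'" "\<not> \<tau>' \<subseteq> \<tau>" for \<tau>'
      proof -
        have h1: "lv q X = zero R \<or> (\<exists>h\<in>\<tau>'. q+h \<notin> E)"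
          using X t unfolding Gamma_char by blast
        show ?thesis
        proof (cases "\<exists>h\<in>\<tau>'. q+h \<notin> E")
          case True then show ?thesis by blast
        next
          case False
          then have "lv q X = zero R" using h1 by blast
          then show ?thesis using sm[OF a Xc] a by simp
        qed
      qed
      then show "smult (space L q) a X \<in> Gamma P L \<tau> q" unfolding Gamma_char using sm[OF a Xc] by blast
    qed
  next
    fix q q' assume l: "qle P q q'"
    show "trans L q q' ` Gamma P L \<tau> q \<subseteq> Gamma P L \<tau> q'"
    proof
      fix Y assume "Y \<in> trans L q q' ` Gamma P L \<tau> q"
      then obtain X where X: "X \<in> Gamma P L \<tau> q" "Y = trans L q q' X" by blast
      then have Xc: "X \<in> carrier (space L q)" unfolding Gamma_char by blast
      note t = vq_trans[OF vq Xc l]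
      have "lv q' Y = zero R \<or> (\<exists>h\<in>\<tau>'. q'+h \<notin> E)" if "face P \<tau>'" "\<not> \<tau>' \<subseteq> \<tau>" for \<tau>'
      proof (cases "q' \<in> E")
        case False then show ?thesis using t X(2) by simp
      next
        case True
        have "lv q X = zero R \<or> (\<exists>h\<in>\<tau>'. q+h \<notin> E)" using X that unfolding Gamma_char by blast
        moreover have "q'+h \<notin> E" if "q+h \<notin> E" for h
          using that dclosedD[OF dc, of "q+h" "q'+h"] l unfolding qle_def by (auto simp: algebra_simps)
        ultimately show ?thesis using t X(2) True by auto
      qed
      then show "Y \<in> Gamma P L \<tau> q'" using t X(2) unfolding Gamma_char by blast
    qed
  qed
  show ?thesis unfolding essential_def
  proof (intro conjI allI impI)
    show "qsubmodule P R L (Gamma P L \<tau>)" by (rule sub)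
  next
    fix S assume S: "qsubmodule P R L S \<and> qnonzero L S"
    then obtain q X where X: "X \<in> S q" "X \<noteq> zero (space L q)" unfolding qnonzero_def by blast
    have Xc: "X \<in> carrier (space L q)" using S X unfolding qsubmodule_def by blast
    have nz: "lv q X \<noteq> zero R" using X(2) vq_inj[OF vq Xc] vq_zero[OF vq] by metis
    then have "q \<in> E" using vq_supp[OF vq Xc] by blast
    then obtain g where g: "qle P q g" "g \<in> E" "\<forall>\<tau>'. face P \<tau>' \<and> \<not> \<tau>' \<subseteq> \<tau> \<longrightarrow> (\<exists>h\<in>\<tau>'. g+h \<notin> E)"
      using good by blast
    define Y where "Y = trans L q g X"
    have Y: "Y \<in> carrier (space L g)" "lv g Y = lv q X" using vq_trans[OF vq Xc g(1)] g(2) unfolding Y_def by auto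
    have YS: "Y \<in> S g" using S X(1) g(1) unfolding qsubmodule_def Y_def by blast
    have YG: "Y \<in> Gamma P L \<tau> g" using Y g(3) unfolding Gamma_char by blast
    have "Y \<noteq> zero (space L g)" using Y nz vq_zero[OF vq] by metis
    then show "qnonzero L (\<lambda>q. S q \<inter> Gamma P L \<tau> q)" unfolding qnonzero_def using YS YG by blast
  qed
qed

end


definition kerN :: "('q \<Rightarrow> 'v \<Rightarrow> 'a) \<Rightarrow> ('a,'c) ring_scheme \<Rightarrow> ('q,'a,'v) qmod \<Rightarrow> 'q \<Rightarrow> 'v set" where
  "kerN val R M q = {m \<in> carrier (space M q). val q m = zero R}"

context
  fixes P :: "'q::ab_group_add set" and R :: "('a,'c) ring_scheme" and E :: "'q set"
    and M :: "('q,'a,'v) qmod" and val :: "'q \<Rightarrow> 'v \<Rightarrow> 'a"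
  assumes cr: "cring R" and pg: "pogroup P" and dc: "dclosed P E" and qm: "qmodule P R M"
    and vc: "\<And>q m. m \<in> carrier (space M q) \<Longrightarrow> val q m \<in> carrier R"
    and vsupp: "\<And>q m. m \<in> carrier (space M q) \<Longrightarrow> val q m \<noteq> zero R \<Longrightarrow> q \<in> E"
    and va: "\<And>q m m'. m \<in> carrier (space M q) \<Longrightarrow> m' \<in> carrier (space M q) \<Longrightarrow>
        val q (add (space M q) m m') = add R (val q m) (val q m')"
    and vm: "\<And>q a m. a \<in> carrier R \<Longrightarrow> m \<in> carrier (space M q) \<Longrightarrow>
        val q (smult (space M q) a m) = mult R a (val q m)"
    and vt: "\<And>q q' m. qle P q q' \<Longrightarrow> m \<in> carrier (space M q) \<Longrightarrow>
        val q' (trans M q q' m) = (if q' \<in> E then val q m else zero R)"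
begin

lemma Mmod: "module R (space M q)" using qm unfolding qmodule_def by blast

lemma Mtrans: "qle P q q' \<Longrightarrow> m \<in> carrier (space M q) \<Longrightarrow> trans M q q' m \<in> carrier (space M q')"
  using qm unfolding qmodule_def linmap_def by blast

lemma val_zero: "val q (zero (space M q)) = zero R"
proof -
  interpret R: cring R by (rule cr)
  interpret V: module R "space M q" by (rule Mmod)
  have "val q (zero (space M q)) = add R (val q (zero (space M q))) (val q (zero (space M q)))"
    using va[of "zero (space M q)" q "zero (space M q)"] by simp
  then show ?thesis using vc[of "zero (space M q)" q] by (metis R.add.l_cancel_one' V.zero_closed)
qed

lemma val_neg: "m \<in> carrier (space M q) \<Longrightarrow> val q (a_inv (space M q) m) = a_inv R (val q m)"
proof -
  assume m: "m \<in> carrier (space M q)"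
  interpret R: cring R by (rule cr)
  interpret V: module R "space M q" by (rule Mmod)
  have "add R (val q (a_inv (space M q) m)) (val q m) = zero R"
    using va[of "a_inv (space M q) m" q m] m val_zero by (simp add: V.l_neg)
  then show ?thesis using vc m by (metis R.minus_equality V.a_inv_closed)
qed

lemma qcls_char: "m \<in> carrier (space M q) \<Longrightarrow> qcls M (kerN val R M) q m = {x \<in> carrier (space M q). val q x = val q m}"
proof -
  assume m: "m \<in> carrier (space M q)"
  interpret R: cring R by (rule cr)
  interpret V: module R "space M q" by (rule Mmod)
  show ?thesis
  proof
    show "qcls M (kerN val R M) q m \<subseteq> {x \<in> carrier (space M q). val q x = val q m}"
    proof
      fix x assume "x \<in> qcls M (kerN val R M) q m"
      then obtain n where n: "n \<in> carrier (space M q)" "val q n = zero R" "x = add (space M q) n m"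
        unfolding qcls_def kerN_def by blast
      then show "x \<in> {x \<in> carrier (space M q). val q x = val q m}" using m va vc by simp
    qed
  next
    show "{x \<in> carrier (space M q). val q x = val q m} \<subseteq> qcls M (kerN val R M) q m"
    proof
      fix x assume x: "x \<in> {x \<in> carrier (space M q). val q x = val q m}"
      define n where "n = add (space M q) x (a_inv (space M q) m)"
      have nc: "n \<in> carrier (space M q)" using x m unfolding n_def by simp
      have nv: "val q n = zero R" using x m vc unfolding n_def by (simp add: va val_neg R.r_neg)
      have "add (space M q) n m = x" using x m unfolding n_def by (simp add: V.a_assoc V.l_neg)
      then show "x \<in> qcls M (kerN val R M) q m" unfolding qcls_def kerN_def using nc nv by force
    qed
  qed
qed

lemma kerN_sub: "qsubmodule P R M (kerN val R M)"
  unfolding qsubmodule_def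
proof (intro conjI allI impI)
  fix q
  interpret R: cring R by (rule cr)
  interpret V: module R "space M q" by (rule Mmod)
  show "kerN val R M q \<subseteq> carrier (space M q)" unfolding kerN_def by blast
  show "submodule (kerN val R M q) R (space M q)"
    by (rule V.submoduleI) (auto simp: kerN_def val_zero val_neg va vm vc)
next
  fix q q' assume "qle P q q'"
  then show "trans M q q' ` kerN val R M q \<subseteq> kerN val R M q'"
    unfolding kerN_def using vt Mtrans by auto
qed


abbreviation "NN \<equiv> kerN val R M"

lemma qcls_some:
  assumes m: "m \<in> carrier (space M q)"
  shows "(SOME x. x \<in> qcls M NN q m) \<in> carrier (space M q) \<and> val q (SOME x. x \<in> qcls M NN q m) = val q m"
proof -
  have "m \<in> qcls M NN q m" using m qcls_char[OF m] by simp
  then have "(SOME x. x \<in> qcls M NN q m) \<in> qcls M NN q m" by (rule someI)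
  then show ?thesis using qcls_char[OF m] by simp
qed

lemma quot_carrierE:
  assumes X: "X \<in> carrier (space (quot M NN) q)"
  obtains m where "m \<in> carrier (space M q)" "X = qcls M NN q m"
  using X unfolding quot_def by auto

lemma quot_some:
  assumes X: "X \<in> carrier (space (quot M NN) q)"
  shows "(SOME x. x \<in> X) \<in> carrier (space M q)" "X = qcls M NN q (SOME x. x \<in> X)"
proof -
  obtain m where m: "m \<in> carrier (space M q)" "X = qcls M NN q m" using quot_carrierE[OF X] by blast
  show s: "(SOME x. x \<in> X) \<in> carrier (space M q)" using qcls_some[OF m(1)] m(2) by simp
  show "X = qcls M NN q (SOME x. x \<in> X)"
    using qcls_char[OF m(1)] qcls_char[OF s] qcls_some[OF m(1)] m(2) by simp
qed

lemma quot_cls_in: "m \<in> carrier (space M q) \<Longrightarrow> qcls M NN q m \<in> carrier (space (quot M NN) q)"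
  unfolding quot_def by simp

lemma quot_val_cls: "m \<in> carrier (space M q) \<Longrightarrow> val q (SOME x. x \<in> qcls M NN q m) = val q m"
  using qcls_some by blast

lemma quot_vqmod: "vqmod P R E (quot M NN) (\<lambda>q X. val q (SOME x. x \<in> X))"
  unfolding vqmod_def
proof (intro conjI allI ballI impI)
  fix q
  interpret R: cring R by (rule cr)
  interpret V: module R "space M q" by (rule Mmod)
  show "vstruct R (space (quot M NN) q) (\<lambda>X. val q (SOME x. x \<in> X))"
    unfolding vstruct_def
  proof (intro conjI ballI)
    fix X assume X: "X \<in> carrier (space (quot M NN) q)"
    show "val q (SOME x. x \<in> X) \<in> carrier R" using vc quot_some(1)[OF X] by blast
  next
    show "inj_on (\<lambda>X. val q (SOME x. x \<in> X)) (carrier (space (quot M NN) q))"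
    proof (rule inj_onI)
      fix X Y assume X: "X \<in> carrier (space (quot M NN) q)" and Y: "Y \<in> carrier (space (quot M NN) q)"
        and e: "val q (SOME x. x \<in> X) = val q (SOME x. x \<in> Y)"
      show "X = Y" using quot_some(2)[OF X] quot_some(2)[OF Y] qcls_char[OF quot_some(1)[OF X]] qcls_char[OF quot_some(1)[OF Y]] e by simp
    qed
  next
    have ez: "zero (space (quot M NN) q) = qcls M NN q (zero (space M q))" by (simp add: quot_def)
    show "zero (space (quot M NN) q) \<in> carrier (space (quot M NN) q)" unfolding ez by (rule quot_cls_in) simp
    show "val q (SOME x. x \<in> zero (space (quot M NN) q)) = zero R" unfolding ez
      using quot_val_cls[of "zero (space M q)"] val_zero by simp
  next
    fix X Y assume X: "X \<in> carrier (space (quot M NN) q)" and Y: "Y \<in> carrier (space (quot M NN) q)"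
    define w where "w = add (space M q) (SOME x. x \<in> X) (SOME x. x \<in> Y)"
    have w: "w \<in> carrier (space M q)" unfolding w_def using quot_some(1)[OF X] quot_some(1)[OF Y] by simp
    have e: "add (space (quot M NN) q) X Y = qcls M NN q w" unfolding w_def by (simp add: quot_def)
    show "add (space (quot M NN) q) X Y \<in> carrier (space (quot M NN) q)" unfolding e using quot_cls_in[OF w] .
    show "val q (SOME x. x \<in> add (space (quot M NN) q) X Y) = add R (val q (SOME x. x \<in> X)) (val q (SOME x. x \<in> Y))"
      unfolding e quot_val_cls[OF w] unfolding w_def using va quot_some(1)[OF X] quot_some(1)[OF Y] by blast
  next
    fix a X assume a: "a \<in> carrier R" and X: "X \<in> carrier (space (quot M NN) q)"
    define w where "w = smult (space M q) a (SOME x. x \<in> X)"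
    have w: "w \<in> carrier (space M q)" unfolding w_def using quot_some(1)[OF X] a by simp
    have e: "smult (space (quot M NN) q) a X = qcls M NN q w" unfolding w_def by (simp add: quot_def)
    show "smult (space (quot M NN) q) a X \<in> carrier (space (quot M NN) q)" unfolding e using quot_cls_in[OF w] .
    show "val q (SOME x. x \<in> smult (space (quot M NN) q) a X) = mult R a (val q (SOME x. x \<in> X))"
      unfolding e quot_val_cls[OF w] unfolding w_def using vm a quot_some(1)[OF X] by blast
  qed
next
  fix q X assume X: "X \<in> carrier (space (quot M NN) q)" and "val q (SOME x. x \<in> X) \<noteq> zero R"
  then show "q \<in> E" using vsupp quot_some(1)[OF X] by blast
next
  fix q q' X assume X: "X \<in> carrier (space (quot M NN) q)" and l: "qle P q q'"
  define w where "w = trans M q q' (SOME x. x \<in> X)"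
  have w: "w \<in> carrier (space M q')" unfolding w_def using quot_some(1)[OF X] Mtrans[OF l] by blast
  have e: "trans (quot M NN) q q' X = qcls M NN q' w" unfolding w_def by (simp add: quot_def)
  show "trans (quot M NN) q q' X \<in> carrier (space (quot M NN) q')" unfolding e using quot_cls_in[OF w] .
  show "val q' (SOME x. x \<in> trans (quot M NN) q q' X) = (if q' \<in> E then val q (SOME x. x \<in> X) else zero R)"
    unfolding e quot_val_cls[OF w] unfolding w_def using vt[OF l] quot_some(1)[OF X] by blast
qed


lemma quot_coprimary:
  assumes fc: "face P \<tau>" and cl: "\<And>q f. q \<in> E \<Longrightarrow> f \<in> \<tau> \<Longrightarrow> q + f \<in> E"
    and good: "\<And>q. q \<in> E \<Longrightarrow> \<exists>g. qle P q g \<and> g \<in> E \<and> (\<forall>\<tau>'. face P \<tau>' \<and> \<not> \<tau>' \<subseteq> \<tau> \<longrightarrow> (\<exists>h\<in>\<tau>'. g+h \<notin> E))"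
  shows "coprimary P R (quot M NN)"
  unfolding coprimary_def
  apply (intro exI[of _ \<tau>] conjI allI fc)
   apply (rule locmap_inj[OF pg fc dc quot_vqmod cl]; assumption)
  apply (rule ess[OF cr pg fc dc loc_vqmod[OF pg fc dc quot_vqmod cl] good]; assumption)
  done

end



lemma qle_refl: "pogroup P \<Longrightarrow> qle P q q"
  unfolding qle_def pogroup_def by simp

lemma qle_trans: "pogroup P \<Longrightarrow> qle P a b \<Longrightarrow> qle P b c \<Longrightarrow> qle P a c"
  unfolding qle_def using pg_add[of P "c - b" "b - a"] by (simp add: algebra_simps)

lemma face_zero_set: "pogroup P \<Longrightarrow> face P {0}"
  unfolding face_def pogroup_def
  by (auto simp: add_eq_0_iff2 minus_equation_iff)

definition SF :: "'q::ab_group_add set \<Rightarrow> 'q set \<Rightarrow> 'q \<Rightarrow> 'q set set" where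
  "SF P D g = {\<sigma>. face P \<sigma> \<and> (\<forall>f\<in>\<sigma>. g + f \<in> D)}"

definition GG :: "'q::ab_group_add set \<Rightarrow> 'q set \<Rightarrow> 'q set \<Rightarrow> 'q set" where
  "GG P D \<tau> = {g \<in> D. (\<forall>f\<in>\<tau>. g + f \<in> D) \<and> (\<forall>\<tau>'. face P \<tau>' \<and> (\<forall>f\<in>\<tau>'. g + f \<in> D) \<longrightarrow> \<tau>' \<subseteq> \<tau>)}"

definition DC :: "'q::ab_group_add set \<Rightarrow> 'q set \<Rightarrow> 'q set \<Rightarrow> 'q set" where
  "DC P D \<tau> = {q. \<exists>g\<in>GG P D \<tau>. qle P q g}"

context
  fixes P :: "'q::ab_group_add set" and D :: "'q set"
  assumes pg: "pogroup P" and fin: "finite {\<sigma>. face P \<sigma>}" and dc: "dclosed P D"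
begin

lemma join_face:
  assumes ft: "face P \<tau>" and fs: "face P \<sigma>"
  shows "face P {p \<in> P. \<exists>a\<in>\<tau>. \<exists>b\<in>\<sigma>. qle P p (a + b)}"
  unfolding face_def
proof (intro conjI ballI)
  show "{p \<in> P. \<exists>a\<in>\<tau>. \<exists>b\<in>\<sigma>. qle P p (a + b)} \<subseteq> P" by blast
  show "0 \<in> {p \<in> P. \<exists>a\<in>\<tau>. \<exists>b\<in>\<sigma>. qle P p (a + b)}"
    using pg_zero[OF pg] face_zero[OF ft] face_zero[OF fs] qle_refl[OF pg, of 0] by force
next
  fix x y assume x: "x \<in> {p \<in> P. \<exists>a\<in>\<tau>. \<exists>b\<in>\<sigma>. qle P p (a + b)}" and y: "y \<in> {p \<in> P. \<exists>a\<in>\<tau>. \<exists>b\<in>\<sigma>. qle P p (a + b)}"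
  then obtain a b a' b' where ab: "a \<in> \<tau>" "b \<in> \<sigma>" "qle P x (a+b)" "a' \<in> \<tau>" "b' \<in> \<sigma>" "qle P y (a'+b')" "x \<in> P" "y \<in> P"
    by blast
  have "qle P (x+y) ((a+a')+(b+b'))"
    using ab(3,6) pg_add[OF pg, of "a + b - x" "a' + b' - y"] unfolding qle_def by (simp add: algebra_simps)
  then show "x + y \<in> {p \<in> P. \<exists>a\<in>\<tau>. \<exists>b\<in>\<sigma>. qle P p (a + b)}"
    using ab face_add[OF ft] face_add[OF fs] pg_add[OF pg] by blast
next
  fix x y assume x: "x \<in> P - {p \<in> P. \<exists>a\<in>\<tau>. \<exists>b\<in>\<sigma>. qle P p (a + b)}" and y: "y \<in> P"
  have "x + y \<in> P" using x y pg_add[OF pg] by blast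
  moreover have "x + y \<notin> {p \<in> P. \<exists>a\<in>\<tau>. \<exists>b\<in>\<sigma>. qle P p (a + b)}"
  proof
    assume "x + y \<in> {p \<in> P. \<exists>a\<in>\<tau>. \<exists>b\<in>\<sigma>. qle P p (a + b)}"
    then obtain a b where "a \<in> \<tau>" "b \<in> \<sigma>" "qle P (x+y) (a+b)" by blast
    moreover have "qle P x (x+y)" by (rule qle_plus[OF y])
    ultimately show False using x qle_trans[OF pg] by blast
  qed
  ultimately show "x + y \<in> P - {p \<in> P. \<exists>a\<in>\<tau>. \<exists>b\<in>\<sigma>. qle P p (a + b)}" by blast
qed

lemma reach_aux: "\<forall>g. g \<in> D \<longrightarrow> card (SF P D g) = n \<longrightarrow> (\<exists>\<tau> g'. face P \<tau> \<and> g' \<in> GG P D \<tau> \<and> qle P g g')"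
proof (induction n rule: less_induct)
  case (less n)
  show ?case
  proof (intro allI impI)
    fix g assume g: "g \<in> D" and cn: "card (SF P D g) = n"
    have finS: "finite (SF P D g)" using fin unfolding SF_def by (rule rev_finite_subset) blast
    have z: "{0} \<in> SF P D g" using face_zero_set[OF pg] g unfolding SF_def by simp
    obtain \<tau> where t: "\<tau> \<in> SF P D g" and tmax: "\<And>b. b \<in> SF P D g \<Longrightarrow> \<tau> \<subseteq> b \<Longrightarrow> \<tau> = b"
      using finite_has_maximal[OF finS] z by blast
    have ft: "face P \<tau>" and tD: "\<And>f. f \<in> \<tau> \<Longrightarrow> g + f \<in> D" using t unfolding SF_def by auto
    show "\<exists>\<tau> g'. face P \<tau> \<and> g' \<in> GG P D \<tau> \<and> qle P g g'"
    proof (cases "\<forall>\<sigma>\<in>SF P D g. \<sigma> \<subseteq> \<tau>")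
      case True
      then have "g \<in> GG P D \<tau>" using g tD unfolding GG_def SF_def by blast
      then show ?thesis using ft qle_refl[OF pg] by blast
    next
      case False
      then obtain \<sigma> where s: "\<sigma> \<in> SF P D g" "\<not> \<sigma> \<subseteq> \<tau>" by blast
      have fs: "face P \<sigma>" using s unfolding SF_def by auto
      have "\<exists>a\<in>\<tau>. \<exists>b\<in>\<sigma>. g + a + b \<notin> D"
      proof (rule ccontr)
        assume "\<not> (\<exists>a\<in>\<tau>. \<exists>b\<in>\<sigma>. g + a + b \<notin> D)"
        then have all: "\<And>a b. a \<in> \<tau> \<Longrightarrow> b \<in> \<sigma> \<Longrightarrow> g + a + b \<in> D" by blast
        define F where "F = {p \<in> P. \<exists>a\<in>\<tau>. \<exists>b\<in>\<sigma>. qle P p (a + b)}"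
        have fF: "face P F" unfolding F_def by (rule join_face[OF ft fs])
        have "g + f \<in> D" if fF': "f \<in> F" for f
        proof -
          obtain a b where "a \<in> \<tau>" "b \<in> \<sigma>" "qle P f (a+b)" using fF' unfolding F_def by blast
          moreover have "qle P (g + f) (g + a + b)" using \<open>qle P f (a+b)\<close> unfolding qle_def by (simp add: algebra_simps)
          ultimately show ?thesis using all dclosedD[OF dc] by blast
        qed
        then have FS: "F \<in> SF P D g" using fF unfolding SF_def by blast
        have tF: "\<tau> \<subseteq> F"
        proof
          fix a assume a: "a \<in> \<tau>"
          then show "a \<in> F" unfolding F_def using face_sub[OF ft a] face_zero[OF fs] qle_refl[OF pg, of a] by force
        qed
        have sF: "\<sigma> \<subseteq> F"
        proof
          fix b assume b: "b \<in> \<sigma>"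
          then show "b \<in> F" unfolding F_def using face_sub[OF fs b] face_zero[OF ft] qle_refl[OF pg, of b] by force
        qed
        show False using tmax[OF FS tF] sF s(2) by blast
      qed
      then obtain a b where ab: "a \<in> \<tau>" "b \<in> \<sigma>" "g + a + b \<notin> D" by blast
      define g' where "g' = g + a"
      have g': "g' \<in> D" using tD[OF ab(1)] unfolding g'_def .
      have sub: "SF P D g' \<subseteq> SF P D g"
      proof
        fix \<rho> assume "\<rho> \<in> SF P D g'"
        then have fr: "face P \<rho>" and rD: "\<And>f. f \<in> \<rho> \<Longrightarrow> g + a + f \<in> D" unfolding SF_def g'_def by auto
        have "g + f \<in> D" if "f \<in> \<rho>" for f
          using dclosedD[OF dc _ rD[OF that], of "g + f"] face_sub[OF ft ab(1)] unfolding qle_def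
          by (simp add: algebra_simps)
        then show "\<rho> \<in> SF P D g" using fr unfolding SF_def by blast
      qed
      have "\<sigma> \<notin> SF P D g'" using ab(2,3) unfolding SF_def g'_def by blast
      then have "SF P D g' \<subset> SF P D g" using sub s(1) by blast
      then have "card (SF P D g') < n" using psubset_card_mono[OF finS] cn by blast
      then obtain \<tau>' g'' where r: "face P \<tau>'" "g'' \<in> GG P D \<tau>'" "qle P g' g''" using less g' by blast
      have "qle P g g'" unfolding g'_def by (rule qle_plus[OF face_sub[OF ft ab(1)]])
      then show ?thesis using r qle_trans[OF pg] by blast
    qed
  qed
qed

lemma reach: "g \<in> D \<Longrightarrow> \<exists>\<tau> g'. face P \<tau> \<and> g' \<in> GG P D \<tau> \<and> qle P g g'"
  using reach_aux by blast

lemma DC_cover: "q \<in> D \<Longrightarrow> \<exists>\<tau>. face P \<tau> \<and> q \<in> DC P D \<tau>"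
  unfolding DC_def using reach by blast

lemma DC_sub: "DC P D \<tau> \<subseteq> D"
  unfolding DC_def GG_def using dclosedD[OF dc] by blast

lemma DC_dclosed: "dclosed P (DC P D \<tau>)"
  unfolding dclosed_def DC_def using qle_trans[OF pg] by blast

lemma GG_add:
  assumes ft: "face P \<tau>" and g: "g \<in> GG P D \<tau>" and f: "f \<in> \<tau>"
  shows "g + f \<in> GG P D \<tau>"
proof -
  have "g + f \<in> D" using g f unfolding GG_def by blast
  moreover have "\<forall>f'\<in>\<tau>. g + f + f' \<in> D" using g f face_add[OF ft f] unfolding GG_def by (simp add: add.assoc)
  moreover have "\<tau>' \<subseteq> \<tau>" if "face P \<tau>'" "\<forall>f'\<in>\<tau>'. g + f + f' \<in> D" for \<tau>'
  proof -
    have "g + f' \<in> D" if "f' \<in> \<tau>'" for f'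
      using dclosedD[OF dc _ \<open>\<forall>f'\<in>\<tau>'. g + f + f' \<in> D\<close>[rule_format, OF that], of "g + f'"] face_sub[OF ft f]
      unfolding qle_def by (simp add: algebra_simps)
    then show ?thesis using g that(1) unfolding GG_def by blast
  qed
  ultimately show ?thesis unfolding GG_def by blast
qed

lemma DC_cl: "face P \<tau> \<Longrightarrow> q \<in> DC P D \<tau> \<Longrightarrow> f \<in> \<tau> \<Longrightarrow> q + f \<in> DC P D \<tau>"
  unfolding DC_def using GG_add unfolding qle_def by (force simp: algebra_simps)

lemma DC_good:
  assumes q: "q \<in> DC P D \<tau>"
  shows "\<exists>g. qle P q g \<and> g \<in> DC P D \<tau> \<and> (\<forall>\<tau>'. face P \<tau>' \<and> \<not> \<tau>' \<subseteq> \<tau> \<longrightarrow> (\<exists>h\<in>\<tau>'. g + h \<notin> DC P D \<tau>))"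
proof -
  obtain g where g: "g \<in> GG P D \<tau>" "qle P q g" using q unfolding DC_def by blast
  have "g \<in> DC P D \<tau>" using g qle_refl[OF pg] unfolding DC_def by blast
  moreover have "\<exists>h\<in>\<tau>'. g + h \<notin> DC P D \<tau>" if "face P \<tau>'" "\<not> \<tau>' \<subseteq> \<tau>" for \<tau>'
    using g(1) that DC_sub unfolding GG_def by blast
  ultimately show ?thesis using g(2) by blast
qed

end



definition vfun :: "'q set \<Rightarrow> ('q \<Rightarrow> 'v \<Rightarrow> nat \<Rightarrow> 'a) \<Rightarrow> nat \<Rightarrow> ('a,'c) ring_scheme \<Rightarrow> 'q \<Rightarrow> 'v \<Rightarrow> 'a" where
  "vfun E \<phi> j R q m = (if q \<in> E then \<phi> q m j else zero R)"

lemma downset_dclosed: "downset P D \<Longrightarrow> dclosed P D"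
  unfolding downset_def dclosed_def qle_def
proof (intro allI impI)
  fix p q assume e: "{d - p |d p. d \<in> D \<and> p \<in> P} = D" and pq: "q - p \<in> P" and q: "q \<in> D"
  have "p = q - (q - p)" by simp
  then have "p \<in> {d - p |d p. d \<in> D \<and> p \<in> P}" using pq q by blast
  then show "p \<in> D" using e by simp
qed

context
  fixes P :: "'q::ab_group_add set" and R :: "('a,'c) ring_scheme" and M :: "('q,'a,'v) qmod"
    and J :: "nat set" and D :: "nat \<Rightarrow> 'q set" and \<phi>
  assumes cr: "cring R" and pg: "pogroup P" and fin: "finite {\<sigma>. face P \<sigma>}" and qm: "qmodule P R M"
    and dJ: "\<And>j. j \<in> J \<Longrightarrow> dclosed P (D j)"
    and qh: "qhom P R M (dsum J (\<lambda>j. dmod R (D j))) \<phi>"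
begin

lemma phi_lin: "linmap R (space M q) (space (dsum J (\<lambda>j. dmod R (D j))) q) (\<phi> q)"
  using qh unfolding qhom_def by blast

lemma phi_carr: "m \<in> carrier (space M q) \<Longrightarrow> \<phi> q m \<in> (\<Pi>\<^sub>E j\<in>J. (if q \<in> D j then carrier R else {zero R}))"
proof -
  assume m: "m \<in> carrier (space M q)"
  have "\<phi> q m \<in> carrier (space (dsum J (\<lambda>j. dmod R (D j))) q)"
  proof -
    have "\<phi> q \<in> carrier (space M q) \<rightarrow> carrier (space (dsum J (\<lambda>j. dmod R (D j))) q)"
      using phi_lin[of q] unfolding linmap_def by blast
    then show ?thesis using m by (rule funcset_mem)
  qed
  then show ?thesis by (simp add: dsum_def dmod_def)
qed

lemma phi_cR: "m \<in> carrier (space M q) \<Longrightarrow> j \<in> J \<Longrightarrow> \<phi> q m j \<in> carrier R"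
proof -
  assume m: "m \<in> carrier (space M q)" and j: "j \<in> J"
  interpret R: cring R by (rule cr)
  have "\<phi> q m j \<in> (if q \<in> D j then carrier R else {zero R})" using PiE_mem[OF phi_carr[OF m] j] by simp
  then show ?thesis by (auto split: if_splits)
qed

lemma phi_out: "m \<in> carrier (space M q) \<Longrightarrow> j \<in> J \<Longrightarrow> q \<notin> D j \<Longrightarrow> \<phi> q m j = zero R"
proof -
  assume m: "m \<in> carrier (space M q)" and j: "j \<in> J" and q: "q \<notin> D j"
  show ?thesis using PiE_mem[OF phi_carr[OF m] j] q by simp
qed

lemma phi_ext: "m \<in> carrier (space M q) \<Longrightarrow> j \<notin> J \<Longrightarrow> \<phi> q m j = undefined"
  using phi_carr by (auto simp: PiE_def extensional_def)

lemma phi_add: "m \<in> carrier (space M q) \<Longrightarrow> m' \<in> carrier (space M q) \<Longrightarrow> j \<in> J \<Longrightarrow>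
   \<phi> q (add (space M q) m m') j = add R (\<phi> q m j) (\<phi> q m' j)"
  using phi_lin unfolding linmap_def dsum_def dmod_def by auto

lemma phi_smult: "a \<in> carrier R \<Longrightarrow> m \<in> carrier (space M q) \<Longrightarrow> j \<in> J \<Longrightarrow>
   \<phi> q (smult (space M q) a m) j = mult R a (\<phi> q m j)"
  using phi_lin unfolding linmap_def dsum_def dmod_def by auto

lemma phi_trans: "qle P q q' \<Longrightarrow> m \<in> carrier (space M q) \<Longrightarrow> j \<in> J \<Longrightarrow>
   \<phi> q' (trans M q q' m) j = (if q' \<in> D j then \<phi> q m j else zero R)"
  using qh unfolding qhom_def dsum_def dmod_def by auto

lemma component:
  assumes j: "j \<in> J" and ft: "face P \<tau>"
  shows "qsubmodule P R M (kerN (vfun (DC P (D j) \<tau>) \<phi> j R) R M)"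
    "coprimary P R (quot M (kerN (vfun (DC P (D j) \<tau>) \<phi> j R) R M))"
    "\<And>q m m'. m \<in> carrier (space M q) \<Longrightarrow> m' \<in> carrier (space M q) \<Longrightarrow>
       qcls M (kerN (vfun (DC P (D j) \<tau>) \<phi> j R) R M) q m = qcls M (kerN (vfun (DC P (D j) \<tau>) \<phi> j R) R M) q m'
       \<Longrightarrow> q \<in> DC P (D j) \<tau> \<Longrightarrow> \<phi> q m j = \<phi> q m' j"
proof -
  interpret R: cring R by (rule cr)
  let ?E = "DC P (D j) \<tau>"
  let ?v = "vfun ?E \<phi> j R"
  have dcj: "dclosed P (D j)" by (rule dJ[OF j])
  have dcE: "dclosed P ?E" by (rule DC_dclosed[OF pg fin dcj])
  have vc: "\<And>q m. m \<in> carrier (space M q) \<Longrightarrow> ?v q m \<in> carrier R"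
    unfolding vfun_def using phi_cR[OF _ j] by simp
  have vsupp: "\<And>q m. m \<in> carrier (space M q) \<Longrightarrow> ?v q m \<noteq> zero R \<Longrightarrow> q \<in> ?E"
    unfolding vfun_def by (auto split: if_splits)
  have va: "\<And>q m m'. m \<in> carrier (space M q) \<Longrightarrow> m' \<in> carrier (space M q) \<Longrightarrow>
        ?v q (add (space M q) m m') = add R (?v q m) (?v q m')"
    unfolding vfun_def using phi_add[OF _ _ j] by simp
  have vm: "\<And>q a m. a \<in> carrier R \<Longrightarrow> m \<in> carrier (space M q) \<Longrightarrow>
        ?v q (smult (space M q) a m) = mult R a (?v q m)"
    unfolding vfun_def using phi_smult[OF _ _ j] by simp
  have vt: "?v q' (trans M q q' m) = (if q' \<in> ?E then ?v q m else zero R)"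
    if l: "qle P q q'" and m: "m \<in> carrier (space M q)" for q q' m
  proof (cases "q' \<in> ?E")
    case True
    then have "q' \<in> D j" using DC_sub[OF pg fin dcj] by blast
    moreover have "q \<in> ?E" using True dclosedD[OF dcE l] by blast
    ultimately show ?thesis using True phi_trans[OF l m j] unfolding vfun_def by simp
  qed (simp add: vfun_def)
  show "qsubmodule P R M (kerN ?v R M)"
    by (rule kerN_sub[OF cr pg dcE qm vc vsupp va vm vt])
  show "coprimary P R (quot M (kerN ?v R M))"
    by (rule quot_coprimary[OF cr pg dcE qm vc vsupp va vm vt ft DC_cl[OF pg fin dcj ft] DC_good[OF pg fin dcj]])
  fix q m m' assume m: "m \<in> carrier (space M q)" and m': "m' \<in> carrier (space M q)"
    and e: "qcls M (kerN ?v R M) q m = qcls M (kerN ?v R M) q m'" and qE: "q \<in> ?E"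
  have "m \<in> qcls M (kerN ?v R M) q m" using qcls_char[OF cr pg dcE qm vc vsupp va vm vt m] m by simp
  then have "?v q m = ?v q m'" using e qcls_char[OF cr pg dcE qm vc vsupp va vm vt m'] by simp
  then show "\<phi> q m j = \<phi> q m' j" using qE unfolding vfun_def by simp
qed

end



theorem theorem5p8:
  fixes P :: "'q::ab_group_add set" and R :: "('a, 'c) ring_scheme" and M :: "('q, 'a, 'v) qmod"
  assumes "field R" and "polyhedral P" and "qmodule P R M" and "downset_finite P R M"
  shows "\<exists>(r::nat) Ms. (\<forall>i<r. qsubmodule P R M (Ms i))
            \<and> (\<forall>i<r. coprimary P R (quot M (Ms i)))
            \<and> (\<forall>q. inj_on (\<lambda>m. \<lambda>i\<in>{..<r}. qcls M (Ms i) q m) (carrier (space M q)))"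
proof -
  have cr: "cring R" using assms(1) unfolding field_def domain_def by blast
  have pg: "pogroup P" and fin: "finite {\<sigma>. face P \<sigma>}" using assms(2) unfolding polyhedral_def by auto
  note qm = assms(3)
  obtain J :: "nat set" and D \<phi> where J: "finite J" and dsJ: "\<forall>j\<in>J. downset P (D j)"
    and qh: "qhom P R M (dsum J (\<lambda>j. dmod R (D j))) \<phi>" and inj: "\<forall>q. inj_on (\<phi> q) (carrier (space M q))"
    using assms(4) unfolding downset_finite_def by blast
  have dJ: "\<And>j. j \<in> J \<Longrightarrow> dclosed P (D j)" using dsJ downset_dclosed by blast
  define I where "I = J \<times> {\<sigma>. face P \<sigma>}"
  have finI: "finite I" unfolding I_def using J fin by simp
  obtain e where e: "bij_betw e {0..<card I} I" using ex_bij_betw_nat_finite[OF finI] by blast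
  then have e': "bij_betw e {..<card I} I" by (simp add: atLeast0LessThan)
  define Ms where "Ms i = kerN (vfun (DC P (D (fst (e i))) (snd (e i))) \<phi> (fst (e i)) R) R M" for i
  have mem: "fst (e i) \<in> J \<and> face P (snd (e i))" if "i < card I" for i
  proof -
    have "e i \<in> I" using bij_betwE[OF e'] that by simp
    then show ?thesis unfolding I_def by (cases "e i") auto
  qed
  note comp = component[where P=P and R=R and M=M and J=J and D=D and \<phi>=\<phi>, OF cr pg fin qm dJ qh]
  show ?thesis
  proof (intro exI[of _ "card I"] exI[of _ Ms] conjI allI impI)
    fix i assume i: "i < card I"
    show "qsubmodule P R M (Ms i)" unfolding Ms_def using comp(1) mem[OF i] by blast
    show "coprimary P R (quot M (Ms i))" unfolding Ms_def using comp(2) mem[OF i] by blast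
  next
    fix q
    show "inj_on (\<lambda>m. \<lambda>i\<in>{..<card I}. qcls M (Ms i) q m) (carrier (space M q))"
    proof (rule inj_onI)
      fix m m' assume m: "m \<in> carrier (space M q)" and m': "m' \<in> carrier (space M q)"
        and eq: "(\<lambda>i\<in>{..<card I}. qcls M (Ms i) q m) = (\<lambda>i\<in>{..<card I}. qcls M (Ms i) q m')"
      have "\<phi> q m j = \<phi> q m' j" for j
      proof (cases "j \<in> J")
        case False then show ?thesis using phi_ext[OF cr pg fin qm dJ qh] m m' by simp
      next
        case j: True
        show ?thesis
        proof (cases "q \<in> D j")
          case False then show ?thesis using phi_out[OF cr pg fin qm dJ qh] m m' j by simp
        next
          case True
          obtain \<tau> where t: "face P \<tau>" "q \<in> DC P (D j) \<tau>" using DC_cover[OF pg fin dJ[OF j] True] by blast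
          have "(j, \<tau>) \<in> I" unfolding I_def using j t by simp
          then obtain i where i: "i < card I" "e i = (j, \<tau>)" using bij_betw_imp_surj_on[OF e'] by force
          have qe: "qcls M (Ms i) q m = qcls M (Ms i) q m'" using fun_cong[OF eq, of i] i(1) by simp
          have triv: "\<And>j. j \<in> J \<Longrightarrow> j \<in> J" by simp
          show ?thesis using comp(3)[OF triv j t(1) m m'] qe t(2) i(2) unfolding Ms_def by simp
        qed
      qed
      then have "\<phi> q m = \<phi> q m'" by blast
      then show "m = m'" using inj m m' by (meson inj_onD)
    qed
  qed
qed

end
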